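(* Let $G$ be a group and $V$ a normal abelian subgroup of $G$. Suppose that every chain of nested subgroups $H_0<H_1<\dots<H_m$ in $G/V$ has length $m\leqslant l$. Then the $c$-dimension of $G$ is at most $2l$. If moreover $V$ is central in $G$, then the $c$-dimension of $G$ is at most $l$.
   Context: The $c$-dimension of a group $G$ is the maximal length $k$ of a chain of nested centralizers $C_G(Y_0)<C_G(Y_1)<\dots<C_G(Y_k)$ (strict inclusions) of subsets $Y_i\subseteq G$. The length of a chain of subgroups $H_0<\dots<H_m$ (strict inclusions) is $m$. *)

theory Defs
  imports "HOL-Algebra.Algebra" "HOL-Library.Extended_Nat"
begin

definition centralizer :: "('a, 'b) monoid_scheme \<Rightarrow> 'a set \<Rightarrow> 'a set" where
  "centralizer G Y = {g \<in> carrier G. \<forall>y\<in>Y. g \<otimes>\<^bsub>G\<^esub> y = y \<otimes>\<^bsub>G\<^esub> g}"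

definition centralizer_chain :: "('a, 'b) monoid_scheme \<Rightarrow> (nat \<Rightarrow> 'a set) \<Rightarrow> nat \<Rightarrow> bool" where
  "centralizer_chain G Y k \<longleftrightarrow>
     (\<forall>i\<le>k. Y i \<subseteq> carrier G) \<and>
     (\<forall>i<k. centralizer G (Y i) \<subset> centralizer G (Y (Suc i)))"

definition c_dimension :: "('a, 'b) monoid_scheme \<Rightarrow> enat" where
  "c_dimension G = Sup {enat k | k. \<exists>Y. centralizer_chain G Y k}"

definition subgroup_chain :: "('a, 'b) monoid_scheme \<Rightarrow> (nat \<Rightarrow> 'a set) \<Rightarrow> nat \<Rightarrow> bool" where
  "subgroup_chain G H m \<longleftrightarrow>
     (\<forall>i\<le>m. subgroup (H i) G) \<and> (\<forall>i<m. H i \<subset> H (Suc i))"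

end

theory Submission
  imports Defs
begin

lemma cent_sub: "centralizer G Y \<subseteq> carrier G"
  by (auto simp: centralizer_def)

lemma cent_anti: "Y \<subseteq> Y' \<Longrightarrow> centralizer G Y' \<subseteq> centralizer G Y"
  by (auto simp: centralizer_def)

lemma cent_subgroup:
  fixes G (structure)
  assumes G: "group G" and Y: "Y \<subseteq> carrier G"
  shows "subgroup (centralizer G Y) G"
proof -
  interpret group G by (rule G)
  show ?thesis
  proof (rule subgroupI)
    show "centralizer G Y \<subseteq> carrier G" by (rule cent_sub)
    show "centralizer G Y \<noteq> {}" using Y by (auto simp: centralizer_def intro!: exI[of _ \<one>])
  next
    fix a assume a: "a \<in> centralizer G Y"
    show "inv a \<in> centralizer G Y"
      unfolding centralizer_def
    proof (intro CollectI conjI ballI)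
      show "inv a \<in> carrier G" using a by (auto simp: centralizer_def)
      fix y assume y: "y \<in> Y"
      have ac: "a \<in> carrier G" and e: "a \<otimes> y = y \<otimes> a" using a y by (auto simp: centralizer_def)
      have yc: "y \<in> carrier G" using y Y by auto
      have "inv a \<otimes> (a \<otimes> y) \<otimes> inv a = inv a \<otimes> (y \<otimes> a) \<otimes> inv a" using e by simp
      moreover have "inv a \<otimes> (a \<otimes> y) \<otimes> inv a = y \<otimes> inv a"
        using ac yc by (simp add: m_assoc[symmetric])
      moreover have "inv a \<otimes> (y \<otimes> a) \<otimes> inv a = inv a \<otimes> y"
        using ac yc by (simp add: m_assoc)
      ultimately show "inv a \<otimes> y = y \<otimes> inv a" by simp
    qed
  next
    fix a b assume a: "a \<in> centralizer G Y" and b: "b \<in> centralizer G Y"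
    show "a \<otimes> b \<in> centralizer G Y"
      unfolding centralizer_def
    proof (intro CollectI conjI ballI)
      show "a \<otimes> b \<in> carrier G" using a b by (auto simp: centralizer_def)
      fix y assume y: "y \<in> Y"
      have ac: "a \<in> carrier G" and e: "a \<otimes> y = y \<otimes> a" using a y by (auto simp: centralizer_def)
      have bc: "b \<in> carrier G" and f: "b \<otimes> y = y \<otimes> b" using b y by (auto simp: centralizer_def)
      have yc: "y \<in> carrier G" using y Y by auto
      have "a \<otimes> b \<otimes> y = a \<otimes> (y \<otimes> b)" using ac bc yc f by (simp add: m_assoc)
      also have "\<dots> = y \<otimes> a \<otimes> b" using ac bc yc e by (simp add: m_assoc[symmetric])
      finally show "a \<otimes> b \<otimes> y = y \<otimes> (a \<otimes> b)" using ac bc yc by (simp add: m_assoc)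
    qed
  qed
qed

lemma cent_triple:
  assumes Y: "Y \<subseteq> carrier G"
  shows "centralizer G (centralizer G (centralizer G Y)) = centralizer G Y"
proof
  have "Y \<subseteq> centralizer G (centralizer G Y)" using Y by (auto simp: centralizer_def)
  thus "centralizer G (centralizer G (centralizer G Y)) \<subseteq> centralizer G Y" by (rule cent_anti)
  have "centralizer G Y \<subseteq> carrier G" by (rule cent_sub)
  thus "centralizer G Y \<subseteq> centralizer G (centralizer G (centralizer G Y))"
    by (auto simp: centralizer_def)
qed

lemma chain_up:
  assumes "\<forall>i\<le>k. subgroup (f i) Q" "\<forall>i<k. f i \<subseteq> f (Suc i)"
  shows "\<exists>H. subgroup_chain Q H (card {i. i<k \<and> f i \<noteq> f (Suc i)})
              \<and> H (card {i. i<k \<and> f i \<noteq> f (Suc i)}) = f k"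
  using assms
proof (induction k)
  case 0
  show ?case by (rule exI[of _ "\<lambda>_. f 0"]) (use 0 in \<open>auto simp: subgroup_chain_def\<close>)
next
  case (Suc k)
  define m where "m = card {i. i<k \<and> f i \<noteq> f (Suc i)}"
  from Suc obtain H where H: "subgroup_chain Q H m" "H m = f k" unfolding m_def by auto
  show ?case
  proof (cases "f k = f (Suc k)")
    case True
    have "{i. i<Suc k \<and> f i \<noteq> f (Suc i)} = {i. i<k \<and> f i \<noteq> f (Suc i)}"
      using True less_Suc_eq by auto
    thus ?thesis using H True m_def by auto
  next
    case False
    have e: "{i. i<Suc k \<and> f i \<noteq> f (Suc i)} = insert k {i. i<k \<and> f i \<noteq> f (Suc i)}"
      using False less_Suc_eq by auto
    have c: "card {i. i<Suc k \<and> f i \<noteq> f (Suc i)} = Suc m" unfolding e m_def by simp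
    define H' where "H' = H(Suc m := f (Suc k))"
    have "subgroup_chain Q H' (Suc m)"
      unfolding subgroup_chain_def
    proof (intro conjI allI impI)
      fix i assume "i \<le> Suc m"
      thus "subgroup (H' i) Q" using H Suc.prems unfolding H'_def subgroup_chain_def
        by (cases "i = Suc m") auto
    next
      fix i assume i: "i < Suc m"
      show "H' i \<subset> H' (Suc i)"
      proof (cases "i = m")
        case True thus ?thesis using H False Suc.prems(2) unfolding H'_def by auto
      next
        case False thus ?thesis using i H unfolding H'_def subgroup_chain_def by auto
      qed
    qed
    thus ?thesis using c H'_def by auto
  qed
qed

lemma chain_down:
  assumes "\<forall>i\<le>k. subgroup (f i) Q" "\<forall>i<k. f (Suc i) \<subseteq> f i"
  shows "\<exists>H. subgroup_chain Q H (card {i. i<k \<and> f i \<noteq> f (Suc i)}) \<and> H 0 = f k"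
  using assms
proof (induction k)
  case 0
  show ?case by (rule exI[of _ "\<lambda>_. f 0"]) (use 0 in \<open>auto simp: subgroup_chain_def\<close>)
next
  case (Suc k)
  define m where "m = card {i. i<k \<and> f i \<noteq> f (Suc i)}"
  from Suc obtain H where H: "subgroup_chain Q H m" "H 0 = f k" unfolding m_def by auto
  show ?case
  proof (cases "f k = f (Suc k)")
    case True
    have "{i. i<Suc k \<and> f i \<noteq> f (Suc i)} = {i. i<k \<and> f i \<noteq> f (Suc i)}"
      using True less_Suc_eq by auto
    thus ?thesis using H True m_def by auto
  next
    case False
    have e: "{i. i<Suc k \<and> f i \<noteq> f (Suc i)} = insert k {i. i<k \<and> f i \<noteq> f (Suc i)}"
      using False less_Suc_eq by auto
    have c: "card {i. i<Suc k \<and> f i \<noteq> f (Suc i)} = Suc m" unfolding e m_def by simp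
    define H' where "H' = (\<lambda>j. case j of 0 \<Rightarrow> f (Suc k) | Suc j \<Rightarrow> H j)"
    have "subgroup_chain Q H' (Suc m)"
      unfolding subgroup_chain_def
    proof (intro conjI allI impI)
      fix i assume "i \<le> Suc m"
      thus "subgroup (H' i) Q" using H Suc.prems unfolding H'_def subgroup_chain_def
        by (cases i) auto
    next
      fix i assume i: "i < Suc m"
      show "H' i \<subset> H' (Suc i)"
      proof (cases i)
        case 0 thus ?thesis using H False Suc.prems(2) unfolding H'_def by auto
      next
        case (Suc j) thus ?thesis using i H unfolding H'_def subgroup_chain_def by auto
      qed
    qed
    moreover have "H' 0 = f (Suc k)" unfolding H'_def by simp
    ultimately show ?thesis using c by auto
  qed
qed

lemma key:
  fixes G (structure)
  assumes G: "group G" and V: "subgroup V G"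
    and ab: "\<forall>x\<in>V. \<forall>y\<in>V. x \<otimes> y = y \<otimes> x"
    and AB: "A \<subseteq> B" and Bc: "B \<subseteq> carrier G"
    and e1: "(\<lambda>a. V #> a) ` B \<subseteq> (\<lambda>a. V #> a) ` A"
    and e2: "(\<lambda>a. V #> a) ` centralizer G A \<subseteq> (\<lambda>a. V #> a) ` centralizer G B"
  shows "centralizer G A \<subseteq> centralizer G B"
proof
  interpret group G by (rule G)
  fix z assume z: "z \<in> centralizer G A"
  have zc: "z \<in> carrier G" using z by (auto simp: centralizer_def)
  have "V #> z \<in> (\<lambda>a. V #> a) ` centralizer G B" using subsetD[OF e2 imageI[OF z]] .
  then obtain z' where z'0: "V #> z = V #> z'" "z' \<in> centralizer G B" by (rule imageE)
  have z': "z' \<in> centralizer G B" "V #> z = V #> z'" using z'0 by auto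
  have z'c: "z' \<in> carrier G" using z' by (auto simp: centralizer_def)
  have "z \<in> V #> z'" using rcos_self[OF zc V] z' by simp
  then obtain w where w: "w \<in> V" "z = w \<otimes> z'" unfolding r_coset_def by auto
  have wc: "w \<in> carrier G" by (rule subgroup.mem_carrier[OF V w(1)])
  show "z \<in> centralizer G B"
    unfolding centralizer_def
  proof (intro CollectI conjI ballI)
    show "z \<in> carrier G" by (rule zc)
    fix c assume c: "c \<in> B"
    have cc: "c \<in> carrier G" using c Bc by auto
    have "V #> c \<in> (\<lambda>a. V #> a) ` A" using subsetD[OF e1 imageI[OF c]] .
    then obtain c' where c'0: "V #> c = V #> c'" "c' \<in> A" by (rule imageE)
    have c': "c' \<in> A" "V #> c = V #> c'" using c'0 by auto
    have c'c: "c' \<in> carrier G" using c' AB Bc by auto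
    have "c \<in> V #> c'" using rcos_self[OF cc V] c' by simp
    then obtain v where v: "v \<in> V" "c = v \<otimes> c'" unfolding r_coset_def by auto
    have vc: "v \<in> carrier G" by (rule subgroup.mem_carrier[OF V v(1)])
    have zc': "z \<otimes> c' = c' \<otimes> z" using z c' by (auto simp: centralizer_def)
    have z'c': "z' \<otimes> c' = c' \<otimes> z'" using z' c' AB by (auto simp: centralizer_def)
    have wv: "w \<otimes> v = v \<otimes> w" using ab w v by auto
    have z'cc: "z' \<otimes> c = c \<otimes> z'" using z' c by (auto simp: centralizer_def)
    have "(w \<otimes> c') \<otimes> z' = w \<otimes> (c' \<otimes> z')" using wc c'c z'c by (simp add: m_assoc)
    also have "\<dots> = w \<otimes> (z' \<otimes> c')" using z'c' by simp
    also have "\<dots> = z \<otimes> c'" using w wc c'c z'c by (simp add: m_assoc)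
    also have "\<dots> = c' \<otimes> z" by (rule zc')
    also have "\<dots> = (c' \<otimes> w) \<otimes> z'" using w wc c'c z'c by (simp add: m_assoc)
    finally have wc': "w \<otimes> c' = c' \<otimes> w" using wc c'c z'c by (simp add: r_cancel)
    have wcc: "w \<otimes> c = c \<otimes> w"
    proof -
      have "w \<otimes> c = (w \<otimes> v) \<otimes> c'" using v wc vc c'c by (simp add: m_assoc)
      also have "\<dots> = v \<otimes> (w \<otimes> c')" using wv wc vc c'c by (simp add: m_assoc)
      also have "\<dots> = v \<otimes> (c' \<otimes> w)" using wc' by simp
      also have "\<dots> = c \<otimes> w" using v wc vc c'c by (simp add: m_assoc)
      finally show ?thesis .
    qed
    have "z \<otimes> c = w \<otimes> (z' \<otimes> c)" using w wc z'c cc by (simp add: m_assoc)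
    also have "\<dots> = w \<otimes> (c \<otimes> z')" using z'cc by simp
    also have "\<dots> = (w \<otimes> c) \<otimes> z'" using wc z'c cc by (simp add: m_assoc)
    also have "\<dots> = (c \<otimes> w) \<otimes> z'" using wcc by simp
    also have "\<dots> = c \<otimes> z" using w wc z'c cc by (simp add: m_assoc)
    finally show "z \<otimes> c = c \<otimes> z" .
  qed
qed

lemma chain_bound:
  fixes G (structure)
  assumes G: "group G"
    and N: "V \<lhd> G"
    and ab: "\<forall>x\<in>V. \<forall>y\<in>V. x \<otimes> y = y \<otimes> x"
    and L: "\<forall>H m. subgroup_chain (G Mod V) H m \<longrightarrow> m \<le> l"
    and ch: "centralizer_chain G Y k"
  shows "k \<le> 2 * l \<and> (V \<subseteq> centralizer G (carrier G) \<longrightarrow> k \<le> l)"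
proof -
  interpret group G by (rule G)
  interpret normal V G by (rule N)
  have Vs: "subgroup V G" by (rule normal_imp_subgroup[OF N])
  define p where "p = (\<lambda>a. V #> a)"
  have gh: "group_hom G (G Mod V) p"
    unfolding group_hom_def group_hom_axioms_def p_def
    using G factorgroup_is_group r_coset_hom_Mod by blast
  define C where "C = (\<lambda>i. centralizer G (Y i))"
  define Z where "Z = (\<lambda>i. centralizer G (C i))"
  define f where "f = (\<lambda>i. p ` C i)"
  define g where "g = (\<lambda>i. p ` Z i)"
  have Yc: "\<And>i. i \<le> k \<Longrightarrow> Y i \<subseteq> carrier G" using ch unfolding centralizer_chain_def by auto
  have Cstrict: "\<And>i. i < k \<Longrightarrow> C i \<subset> C (Suc i)" using ch unfolding centralizer_chain_def C_def by auto
  have Cc: "\<And>i. C i \<subseteq> carrier G" unfolding C_def by (rule cent_sub)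
  have fsub: "\<forall>i\<le>k. subgroup (f i) (G Mod V)"
    unfolding f_def C_def using group_hom.subgroup_img_is_subgroup[OF gh] cent_subgroup[OF G] Yc by blast
  have gsub: "\<forall>i\<le>k. subgroup (g i) (G Mod V)"
    unfolding g_def Z_def using group_hom.subgroup_img_is_subgroup[OF gh] cent_subgroup[OF G] Cc by blast
  have fmono: "\<forall>i<k. f i \<subseteq> f (Suc i)" unfolding f_def using Cstrict by blast
  have gmono: "\<forall>i<k. g (Suc i) \<subseteq> g i" unfolding g_def Z_def
    using Cstrict cent_anti[of "C _" "C (Suc _)" G] by (meson image_mono less_imp_le)
  define S1 where "S1 = {i. i<k \<and> f i \<noteq> f (Suc i)}"
  define S2 where "S2 = {i. i<k \<and> g i \<noteq> g (Suc i)}"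
  obtain H1 where "subgroup_chain (G Mod V) H1 (card S1)"
    using chain_up[OF fsub fmono] unfolding S1_def by blast
  hence a: "card S1 \<le> l" using L by blast
  obtain H2 where "subgroup_chain (G Mod V) H2 (card S2)"
    using chain_down[OF gsub gmono] unfolding S2_def by blast
  hence b: "card S2 \<le> l" using L by blast
  have cover: "{..<k} \<subseteq> S1 \<union> S2"
  proof
    fix i assume "i \<in> {..<k}"
    hence i: "i < k" by simp
    show "i \<in> S1 \<union> S2"
    proof (rule ccontr)
      assume "i \<notin> S1 \<union> S2"
      hence e1: "f i = f (Suc i)" and e2: "g i = g (Suc i)" using i unfolding S1_def S2_def by auto
      have "Z i \<subseteq> Z (Suc i)" unfolding Z_def
        by (rule key[OF G Vs ab]) (use Cstrict[OF i] Cc e1 e2 in \<open>auto simp: f_def g_def Z_def p_def\<close>)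
      hence "centralizer G (Z (Suc i)) \<subseteq> centralizer G (Z i)" by (rule cent_anti)
      moreover have "centralizer G (Z i) = C i" unfolding Z_def C_def
        by (rule cent_triple) (use Yc i in auto)
      moreover have "centralizer G (Z (Suc i)) = C (Suc i)" unfolding Z_def C_def
        by (rule cent_triple) (use Yc i in auto)
      ultimately show False using Cstrict[OF i] by auto
    qed
  qed
  have fin: "finite S1" "finite S2" unfolding S1_def S2_def by auto
  have "k = card {..<k}" by simp
  also have "\<dots> \<le> card (S1 \<union> S2)" using cover fin by (intro card_mono) auto
  also have "\<dots> \<le> card S1 + card S2" by (rule card_Un_le)
  finally have k2: "k \<le> 2 * l" using a b by linarith
  have "V \<subseteq> centralizer G (carrier G) \<longrightarrow> k \<le> l"
  proof
    assume cen: "V \<subseteq> centralizer G (carrier G)"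
    have "S1 = {..<k}"
    proof (rule ccontr)
      assume "S1 \<noteq> {..<k}"
      then obtain i where i: "i < k" and e: "f i = f (Suc i)" unfolding S1_def by auto
      obtain c where c: "c \<in> C (Suc i)" "c \<notin> C i" using Cstrict[OF i] by auto
      have cc: "c \<in> carrier G" using c Cc by auto
      have "p c \<in> f i" using e c unfolding f_def by auto
      then obtain c' where c'0: "p c = p c'" "c' \<in> C i" unfolding f_def by (rule imageE)
      have "c \<in> V #> c'" using rcos_self[OF cc Vs] c'0 unfolding p_def by simp
      then obtain v where v: "v \<in> V" "c = v \<otimes> c'" unfolding r_coset_def by auto
      have CiS: "subgroup (C i) G" unfolding C_def by (rule cent_subgroup[OF G Yc]) (use i in auto)
      have "v \<in> C i" using cen v(1) Yc[of i] i unfolding C_def centralizer_def by auto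
      hence "c \<in> C i" using v(2) c'0(2) subgroup.m_closed[OF CiS] by simp
      thus False using c by simp
    qed
    thus "k \<le> l" using a by simp
  qed
  with k2 show ?thesis by simp
qed

theorem lemma2:
  fixes G :: "('a, 'b) monoid_scheme" and V :: "'a set" and l :: nat
  assumes "group G"
    and "V \<lhd> G"
    and "\<forall>x\<in>V. \<forall>y\<in>V. x \<otimes>\<^bsub>G\<^esub> y = y \<otimes>\<^bsub>G\<^esub> x"
    and "\<forall>H m. subgroup_chain (G Mod V) H m \<longrightarrow> m \<le> l"
  shows "c_dimension G \<le> enat (2 * l) \<and>
         (V \<subseteq> centralizer G (carrier G) \<longrightarrow> c_dimension G \<le> enat l)"
proof
  show "c_dimension G \<le> enat (2 * l)"
    unfolding c_dimension_def
    by (rule Sup_least) (use chain_bound[OF assms] in auto)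
  show "V \<subseteq> centralizer G (carrier G) \<longrightarrow> c_dimension G \<le> enat l"
    unfolding c_dimension_def
    by (intro impI Sup_least) (use chain_bound[OF assms] in auto)
qed

end
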